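(* Let $\mathcal G=((V,E),(V_1,V_2,V_\Diamond),\delta,w)$ be a stochastic game and $\varphi$ a bounded prefix-independent objective. Consider the classes of the expected value vector $\mathsf r^*=(\mathbb{E}_v(\varphi))_{v\in V}$, and suppose exactly $m\ge1$ of them contain boundary vertices. Index the classes as $C_1,\dots,C_k$ so that $C_1,\dots,C_m$ are those containing boundary vertices, in increasing order of value, and $C_{m+1},\dots,C_k$ are those without boundary vertices, in increasing order of value. For $1\le i\le m$ fix a boundary vertex $u_i$ of $C_i$ and for $1\le j\le k$ let $p_{i,j}=\sum_{v'\in E(u_i)\cap C_j}\delta(u_i)(v')$. Let $Q_B=(p_{i,j})_{1\le i,j\le m}$, $I$ the $m\times m$ identity matrix, $\alpha$ the least common multiple of the denominators of the $p_{i,j}$ ($1\le i\le m$, $1\le j\le k$), and $D=\det(\alpha(I-Q_B))$. Let $N$ be the maximum denominator (in lowest terms) of the probabilities $\delta(v)(v')$ occurring in $\mathcal G$. Then $D$ is an integer and $|D|\le(2\alpha)^m\le 2^{|V|}\cdot N^{|V|^3}$.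
   Context: A stochastic game is $\mathcal{G}=((V,E),(V_1,V_2,V_\Diamond),\delta,w)$: a finite directed graph $(V,E)$ in which every vertex $v$ has a nonempty out-neighbour set $E(v)$, a partition of $V$ into Player 1, Player 2 and probabilistic vertices, a function $\delta$ giving each $v\in V_\Diamond$ a rational probability distribution $\delta(v)$ on $E(v)$, positive on every out-neighbour, and payoffs $w:E\to\mathbb{Q}$. Plays are infinite paths; deterministic strategies of Player $i$ map finite prefixes ending in $V_i$ to an out-neighbour of the last vertex; a strategy pair and initial vertex induce a probability measure on plays. An objective $\varphi$ is a Borel-measurable real function on plays; bounded if $|\varphi|\le W_\varphi$ for an integer $W_\varphi$; prefix-independent if plays with a common suffix get equal value. $\mathbb{E}_v(\varphi)=\sup_{\sigma_1}\inf_{\sigma_2}\mathbb{E}^{\sigma_1,\sigma_2}_v[\varphi]=\inf_{\sigma_2}\sup_{\sigma_1}\mathbb{E}^{\sigma_1,\sigma_2}_v[\varphi]$ (Player 1 maximises, Player 2 minimises). For a real vector $\mathsf r$ indexed by $V$, its classes are the maximal nonempty sets of vertices on which $\mathsf r$ is constant (the constant being the class value); a vertex $v$ of class $C$ is a boundary vertex if $v\in V_\Diamond$ and $E(v)\not\subseteq C$. *)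

theory Defs
  imports "HOL-Probability.Probability" "Jordan_Normal_Form.Determinant"
begin

definition succ :: "('v \<times> 'v) set \<Rightarrow> 'v \<Rightarrow> 'v set" where
  "succ E v = {v'. (v, v') \<in> E}"

definition stochastic_game ::
  "'v set \<Rightarrow> ('v \<times> 'v) set \<Rightarrow> 'v set \<Rightarrow> 'v set \<Rightarrow> 'v set \<Rightarrow> ('v \<Rightarrow> 'v \<Rightarrow> rat) \<Rightarrow> ('v \<times> 'v \<Rightarrow> rat) \<Rightarrow> bool" where
  "stochastic_game V E V1 V2 VP \<delta> w \<longleftrightarrow>
     finite V \<and> E \<subseteq> V \<times> V \<and> (\<forall>v\<in>V. succ E v \<noteq> {}) \<and>
     V1 \<union> V2 \<union> VP = V \<and> V1 \<inter> V2 = {} \<and> V1 \<inter> VP = {} \<and> V2 \<inter> VP = {} \<and>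
     (\<forall>v\<in>VP. (\<forall>v'\<in>succ E v. \<delta> v v' > 0) \<and> (\<Sum>v'\<in>succ E v. \<delta> v v') = 1)"

definition is_path :: "('v \<times> 'v) set \<Rightarrow> 'v list \<Rightarrow> bool" where
  "is_path E h \<longleftrightarrow> h \<noteq> [] \<and> (\<forall>i. Suc i < length h \<longrightarrow> (h ! i, h ! Suc i) \<in> E)"

definition is_play :: "('v \<times> 'v) set \<Rightarrow> (nat \<Rightarrow> 'v) \<Rightarrow> bool" where
  "is_play E \<rho> \<longleftrightarrow> (\<forall>n. (\<rho> n, \<rho> (Suc n)) \<in> E)"

definition strategy :: "('v \<times> 'v) set \<Rightarrow> 'v set \<Rightarrow> ('v list \<Rightarrow> 'v) \<Rightarrow> bool" where
  "strategy E Vi \<sigma> \<longleftrightarrow> (\<forall>h. is_path E h \<and> last h \<in> Vi \<longrightarrow> (last h, \<sigma> h) \<in> E)"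

definition delta_pmf :: "('v \<times> 'v) set \<Rightarrow> ('v \<Rightarrow> 'v \<Rightarrow> rat) \<Rightarrow> 'v \<Rightarrow> 'v pmf" where
  "delta_pmf E \<delta> v = embed_pmf (\<lambda>v'. if (v, v') \<in> E then real_of_rat (\<delta> v v') else 0)"

text \<open>One round of randomness: independently for every probabilistic vertex a successor
  drawn according to its distribution.\<close>
definition choice_pmf :: "'v set \<Rightarrow> ('v \<times> 'v) set \<Rightarrow> ('v \<Rightarrow> 'v \<Rightarrow> rat) \<Rightarrow> ('v \<Rightarrow> 'v) pmf" where
  "choice_pmf VP E \<delta> = Pi_pmf VP undefined (delta_pmf E \<delta>)"

primrec hist :: "'v set \<Rightarrow> 'v set \<Rightarrow> ('v list \<Rightarrow> 'v) \<Rightarrow> ('v list \<Rightarrow> 'v) \<Rightarrow> 'v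
     \<Rightarrow> (nat \<Rightarrow> 'v \<Rightarrow> 'v) \<Rightarrow> nat \<Rightarrow> 'v list" where
  "hist V1 V2 \<sigma>1 \<sigma>2 v0 \<omega> 0 = [v0]"
| "hist V1 V2 \<sigma>1 \<sigma>2 v0 \<omega> (Suc n) =
     (let h = hist V1 V2 \<sigma>1 \<sigma>2 v0 \<omega> n; u = last h in
      h @ [if u \<in> V1 then \<sigma>1 h else if u \<in> V2 then \<sigma>2 h else \<omega> n u])"

definition play :: "'v set \<Rightarrow> 'v set \<Rightarrow> ('v list \<Rightarrow> 'v) \<Rightarrow> ('v list \<Rightarrow> 'v) \<Rightarrow> 'v
     \<Rightarrow> (nat \<Rightarrow> 'v \<Rightarrow> 'v) \<Rightarrow> nat \<Rightarrow> 'v" where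
  "play V1 V2 \<sigma>1 \<sigma>2 v0 \<omega> n = last (hist V1 V2 \<sigma>1 \<sigma>2 v0 \<omega> n)"

definition play_measure :: "'v set \<Rightarrow> 'v set \<Rightarrow> 'v set \<Rightarrow> ('v \<times> 'v) set \<Rightarrow> ('v \<Rightarrow> 'v \<Rightarrow> rat)
     \<Rightarrow> ('v list \<Rightarrow> 'v) \<Rightarrow> ('v list \<Rightarrow> 'v) \<Rightarrow> 'v \<Rightarrow> (nat \<Rightarrow> 'v) measure" where
  "play_measure V1 V2 VP E \<delta> \<sigma>1 \<sigma>2 v0 =
     distr (PiM UNIV (\<lambda>_::nat. measure_pmf (choice_pmf VP E \<delta>)))
           (PiM UNIV (\<lambda>_::nat. count_space UNIV))
           (play V1 V2 \<sigma>1 \<sigma>2 v0)"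

definition game_value :: "'v set \<Rightarrow> 'v set \<Rightarrow> 'v set \<Rightarrow> ('v \<times> 'v) set \<Rightarrow> ('v \<Rightarrow> 'v \<Rightarrow> rat)
     \<Rightarrow> ((nat \<Rightarrow> 'v) \<Rightarrow> real) \<Rightarrow> 'v \<Rightarrow> real" where
  "game_value V1 V2 VP E \<delta> \<phi> v =
     (SUP \<sigma>1\<in>{\<sigma>. strategy E V1 \<sigma>}. INF \<sigma>2\<in>{\<sigma>. strategy E V2 \<sigma>}.
        integral\<^sup>L (play_measure V1 V2 VP E \<delta> \<sigma>1 \<sigma>2 v) \<phi>)"

definition bounded_objective :: "('v \<times> 'v) set \<Rightarrow> ((nat \<Rightarrow> 'v) \<Rightarrow> real) \<Rightarrow> bool" where
  "bounded_objective E \<phi> \<longleftrightarrow> (\<exists>W::int. \<forall>\<rho>. is_play E \<rho> \<longrightarrow> \<bar>\<phi> \<rho>\<bar> \<le> of_int W)"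

definition prefix_independent :: "('v \<times> 'v) set \<Rightarrow> ((nat \<Rightarrow> 'v) \<Rightarrow> real) \<Rightarrow> bool" where
  "prefix_independent E \<phi> \<longleftrightarrow>
     (\<forall>\<rho> \<rho>' i j. is_play E \<rho> \<and> is_play E \<rho>' \<and> (\<forall>n. \<rho> (i + n) = \<rho>' (j + n)) \<longrightarrow> \<phi> \<rho> = \<phi> \<rho>')"

definition value_classes :: "'v set \<Rightarrow> ('v \<Rightarrow> real) \<Rightarrow> 'v set set" where
  "value_classes V val = {{x \<in> V. val x = val y} | y. y \<in> V}"

definition is_boundary :: "'v set \<Rightarrow> ('v \<times> 'v) set \<Rightarrow> 'v set \<Rightarrow> 'v \<Rightarrow> bool" where
  "is_boundary VP E C v \<longleftrightarrow> v \<in> C \<and> v \<in> VP \<and> \<not> succ E v \<subseteq> C"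

end

theory Submission
  imports Defs
begin

lemma abs_sign_of_int: "\<bar>(of_int (sign p) :: 'a::linordered_idom)\<bar> = 1"
  by (simp add: sign_def)

lemma det_abs_bound:
  fixes A :: "'a::linordered_idom mat"
  assumes A: "A \<in> carrier_mat n n"
  shows "\<bar>det A\<bar> \<le> (\<Prod>i = 0..<n. \<Sum>j = 0..<n. \<bar>A $$ (i, j)\<bar>)"
proof -
  let ?P = "{p. p permutes {0..<n}}"
  let ?h = "\<lambda>p. \<Prod>i = 0..<n. \<bar>A $$ (i, p i)\<bar>"
  have fP: "finite ?P" by (simp add: finite_permutations)
  have "\<bar>det A\<bar> = \<bar>\<Sum>p\<in>?P. of_int (sign p) * (\<Prod>i = 0..<n. A $$ (i, p i))\<bar>"
    by (simp add: det_def'[OF A])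
  also have "\<dots> \<le> (\<Sum>p\<in>?P. \<bar>of_int (sign p) * (\<Prod>i = 0..<n. A $$ (i, p i))\<bar>)"
    by (rule sum_abs)
  also have "\<dots> = (\<Sum>p\<in>?P. ?h p)"
    by (simp add: abs_mult abs_sign_of_int abs_prod)
  also have "\<dots> = (\<Sum>p\<in>?P. ?h (restrict p {0..<n}))"
    by (intro sum.cong refl prod.cong) auto
  also have "\<dots> = sum ?h ((\<lambda>p. restrict p {0..<n}) ` ?P)"
  proof (rule sum.reindex[symmetric, unfolded comp_def])
    show "inj_on (\<lambda>p. restrict p {0..<n}) ?P"
    proof
      fix p q assume p: "p \<in> ?P" and q: "q \<in> ?P" and e: "restrict p {0..<n} = restrict q {0..<n}"
      show "p = q"
      proof
        fix x show "p x = q x"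
        proof (cases "x \<in> {0..<n}")
          case True then show ?thesis using fun_cong[OF e, of x] by simp
        next
          case False then show ?thesis using p q by (simp add: permutes_def)
        qed
      qed
    qed
  qed
  also have "\<dots> \<le> sum ?h (PiE {0..<n} (\<lambda>_. {0..<n}))"
  proof (rule sum_mono2)
    show "finite (PiE {0..<n} (\<lambda>_. {0..<n::nat}))" by (simp add: finite_PiE)
    show "(\<lambda>p. restrict p {0..<n}) ` ?P \<subseteq> PiE {0..<n} (\<lambda>_. {0..<n})"
      using permutes_in_image by fastforce
    show "\<And>b. b \<in> PiE {0..<n} (\<lambda>_. {0..<n}) - (\<lambda>p. restrict p {0..<n}) ` ?P \<Longrightarrow> 0 \<le> ?h b"
      by (simp add: prod_nonneg)
  qed
  also have "\<dots> = (\<Prod>i = 0..<n. \<Sum>j = 0..<n. \<bar>A $$ (i, j)\<bar>)"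
    by (rule prod_sum_PiE[symmetric]) auto
  finally show ?thesis .
qed

lemma det_row_bound:
  fixes A :: "'a::linordered_idom mat"
  assumes A: "A \<in> carrier_mat n n"
    and R: "\<And>i. i < n \<Longrightarrow> (\<Sum>j = 0..<n. \<bar>A $$ (i, j)\<bar>) \<le> c"
  shows "\<bar>det A\<bar> \<le> c ^ n"
proof -
  have "\<bar>det A\<bar> \<le> (\<Prod>i = 0..<n. \<Sum>j = 0..<n. \<bar>A $$ (i, j)\<bar>)" by (rule det_abs_bound[OF A])
  also have "\<dots> \<le> (\<Prod>i = 0..<n. c)"
    by (rule prod_mono) (use R in \<open>auto intro: sum_nonneg\<close>)
  also have "\<dots> = c ^ n" by simp
  finally show ?thesis .
qed

lemma det_Ints:
  fixes A :: "'a::linordered_idom mat"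
  assumes A: "A \<in> carrier_mat n n" and I: "\<And>i j. i < n \<Longrightarrow> j < n \<Longrightarrow> A $$ (i, j) \<in> \<int>"
  shows "det A \<in> \<int>"
  unfolding det_def'[OF A]
proof (rule Ints_sum, rule Ints_mult)
  fix p assume "p \<in> {p. p permutes {0..<n}}"
  then have "\<And>i. i \<in> {0..<n} \<Longrightarrow> p i < n" using permutes_in_image by fastforce
  then show "(\<Prod>i = 0..<n. A $$ (i, p i)) \<in> \<int>" by (intro Ints_prod I) auto
qed simp

lemma rat_mult_denom_Ints:
  assumes "snd (quotient_of q) dvd a"
  shows "(of_int a :: rat) * q \<in> \<int>"
proof -
  obtain n d where qd: "quotient_of q = (n, d)" by (cases "quotient_of q")
  have d: "d > 0" using quotient_of_denom_pos[OF qd] .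
  obtain c where a: "a = d * c" using assms qd by (auto elim: dvdE)
  have "(of_int a :: rat) * q = of_int c * of_int n"
    using quotient_of_div[OF qd] a d by simp
  then show ?thesis by simp
qed

lemma Ints_imp_denom_dvd:
  assumes "(of_int a :: rat) * q \<in> \<int>"
  shows "snd (quotient_of q) dvd a"
proof -
  obtain n d where qd: "quotient_of q = (n, d)" by (cases "quotient_of q")
  have d: "d > 0" using quotient_of_denom_pos[OF qd] .
  have cop: "coprime n d" using quotient_of_coprime[OF qd] .
  obtain z where z: "(of_int a :: rat) * q = of_int z" using assms by (auto elim: Ints_cases)
  have "(of_int a :: rat) * of_int n = of_int z * of_int d"
    using z quotient_of_div[OF qd] d by (simp add: field_simps)
  then have "a * n = z * d" by (metis of_int_eq_iff of_int_mult)
  then have "d dvd a * n" by (metis dvd_triv_right)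
  then have "d dvd a" using cop by (metis coprime_commute coprime_dvd_mult_left_iff)
  then show ?thesis using qd by simp
qed


theorem proposition13:
  fixes V :: "'v set" and E :: "('v \<times> 'v) set" and V1 V2 VP :: "'v set"
    and \<delta> :: "'v \<Rightarrow> 'v \<Rightarrow> rat" and w :: "'v \<times> 'v \<Rightarrow> rat"
    and \<phi> :: "(nat \<Rightarrow> 'v) \<Rightarrow> real"
    and k m :: nat and C :: "nat \<Rightarrow> 'v set" and u :: "nat \<Rightarrow> 'v"
  defines "r \<equiv> game_value V1 V2 VP E \<delta> \<phi>"
  assumes game: "stochastic_game V E V1 V2 VP \<delta> w"
    and meas: "\<phi> \<in> borel_measurable (PiM UNIV (\<lambda>_::nat. count_space UNIV))"
    and bnd: "bounded_objective E \<phi>"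
    and pind: "prefix_independent E \<phi>"
    and m1: "1 \<le> m" and mk: "m \<le> k"
    and Cbij: "bij_betw C {1..k} (value_classes V r)"
    and Cbd: "\<forall>i\<in>{1..m}. \<exists>v. is_boundary VP E (C i) v"
    and Cnbd: "\<forall>i\<in>{m+1..k}. \<not> (\<exists>v. is_boundary VP E (C i) v)"
    and ord1: "\<forall>i\<in>{1..m}. \<forall>j\<in>{1..m}. \<forall>v\<in>C i. \<forall>v'\<in>C j. i < j \<longrightarrow> r v < r v'"
    and ord2: "\<forall>i\<in>{m+1..k}. \<forall>j\<in>{m+1..k}. \<forall>v\<in>C i. \<forall>v'\<in>C j. i < j \<longrightarrow> r v < r v'"
    and ub: "\<forall>i\<in>{1..m}. is_boundary VP E (C i) (u i)"
  shows
    "let p = (\<lambda>i j. \<Sum>v'\<in>succ E (u i) \<inter> C j. \<delta> (u i) v');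
         \<alpha> = Lcm {snd (quotient_of (p i j)) | i j. i \<in> {1..m} \<and> j \<in> {1..k}};
         D = Determinant.det (Matrix.mat m m (\<lambda>(i, j).
               of_int \<alpha> * ((if i = j then 1 else 0) - p (Suc i) (Suc j))));
         N = Max {snd (quotient_of (\<delta> v v')) | v v'. v \<in> VP \<and> (v, v') \<in> E}
     in D \<in> \<int> \<and> \<bar>D\<bar> \<le> (2 * of_int \<alpha>) ^ m \<and>
        (2 * \<alpha>) ^ m \<le> 2 ^ card V * N ^ (card V ^ 3)"
proof -
  define p where "p = (\<lambda>i j. \<Sum>v'\<in>succ E (u i) \<inter> C j. \<delta> (u i) v')"
  define \<alpha> where "\<alpha> = Lcm {snd (quotient_of (p i j)) | i j. i \<in> {1..m} \<and> j \<in> {1..k}}"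
  define M where "M = Matrix.mat m m (\<lambda>(i, j).
               of_int \<alpha> * ((if i = j then 1 else 0) - p (Suc i) (Suc j)))"
  define S where "S = {snd (quotient_of (\<delta> v v')) | v v'. v \<in> VP \<and> (v, v') \<in> E}"
  define N where "N = Max S"
  define L where "L = Lcm S"
  have finV: "finite V" and EV: "E \<subseteq> V \<times> V" and VPV: "VP \<subseteq> V"
    and dpos: "\<And>v v'. v \<in> VP \<Longrightarrow> v' \<in> succ E v \<Longrightarrow> \<delta> v v' > 0"
    and dsum: "\<And>v. v \<in> VP \<Longrightarrow> (\<Sum>v'\<in>succ E v. \<delta> v v') = 1"
    using game unfolding stochastic_game_def by auto
  have finE: "finite E" using finV EV by (meson finite_SigmaI finite_subset)
  have finsucc: "\<And>v. finite (succ E v)"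
  proof -
    fix v have "succ E v \<subseteq> snd ` E" unfolding succ_def by force
    then show "finite (succ E v)" using finE by (meson finite_imageI finite_subset)
  qed
  have cardE: "card E \<le> card V ^ 2"
  proof -
    have "card E \<le> card (V \<times> V)" using EV finV by (intro card_mono) auto
    then show ?thesis by (simp add: card_cartesian_product power2_eq_square)
  qed
  have vc: "value_classes V r = (\<lambda>y. {x \<in> V. r x = r y}) ` V"
    unfolding value_classes_def by auto
  have kV: "k \<le> card V"
  proof -
    have "k = card (value_classes V r)" using bij_betw_same_card[OF Cbij] by simp
    also have "\<dots> \<le> card V" unfolding vc by (rule card_image_le[OF finV])
    finally show ?thesis .
  qed
  have mV: "m \<le> card V" using mk kV by simp
  have Cdisj: "C i \<inter> C j = {}" if "i \<in> {1..k}" "j \<in> {1..k}" "i \<noteq> j" for i j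
  proof (rule ccontr)
    assume "C i \<inter> C j \<noteq> {}"
    then obtain x where x: "x \<in> C i" "x \<in> C j" by auto
    have CI: "C ` {1..k} = value_classes V r" using Cbij by (simp add: bij_betw_def)
    have "C i \<in> C ` {1..k}" using that(1) by (rule imageI)
    then have "C i \<in> (\<lambda>y. {x \<in> V. r x = r y}) ` V" by (simp only: CI vc)
    then obtain y1 where e1: "C i = {x \<in> V. r x = r y1}" by (elim imageE)
    have "C j \<in> C ` {1..k}" using that(2) by (rule imageI)
    then have "C j \<in> (\<lambda>y. {x \<in> V. r x = r y}) ` V" by (simp only: CI vc)
    then obtain y2 where e2: "C j = {x \<in> V. r x = r y2}" by (elim imageE)
    have "x \<in> {x \<in> V. r x = r y1}" using x(1) by (simp only: e1)
    moreover have "x \<in> {x \<in> V. r x = r y2}" using x(2) by (simp only: e2)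
    ultimately have "r y1 = r y2" by simp
    then have "C i = C j" unfolding e1 e2 by simp
    moreover have "inj_on C {1..k}" using Cbij unfolding bij_betw_def by blast
    ultimately have "i = j" using that by (simp add: inj_on_eq_iff)
    then show False using that(3) by simp
  qed
  have uVP: "u i \<in> VP" if "i \<in> {1..m}" for i using ub that unfolding is_boundary_def by auto
  have pnn: "p i j \<ge> 0" if "i \<in> {1..m}" for i j
    unfolding p_def using dpos[OF uVP[OF that]] by (intro sum_nonneg) (auto intro: less_imp_le)
  have psum: "(\<Sum>j<m. p i (Suc j)) \<le> 1" if i: "i \<in> {1..m}" for i
  proof -
    have "(\<Sum>j<m. p i (Suc j)) = (\<Sum>v'\<in>(\<Union>j<m. succ E (u i) \<inter> C (Suc j)). \<delta> (u i) v')"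
      unfolding p_def
    proof (rule sum.UNION_disjoint[symmetric])
      show "finite {..<m}" by simp
      show "\<forall>j\<in>{..<m}. finite (succ E (u i) \<inter> C (Suc j))" using finsucc by auto
      show "\<forall>j1\<in>{..<m}. \<forall>j2\<in>{..<m}. j1 \<noteq> j2 \<longrightarrow>
          succ E (u i) \<inter> C (Suc j1) \<inter> (succ E (u i) \<inter> C (Suc j2)) = {}"
      proof (intro ballI impI)
        fix j1 j2 assume "j1 \<in> {..<m}" "j2 \<in> {..<m}" "j1 \<noteq> j2"
        then have "C (Suc j1) \<inter> C (Suc j2) = {}" using mk by (intro Cdisj) auto
        then show "succ E (u i) \<inter> C (Suc j1) \<inter> (succ E (u i) \<inter> C (Suc j2)) = {}" by blast
      qed
    qed
    also have "\<dots> \<le> (\<Sum>v'\<in>succ E (u i). \<delta> (u i) v')"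
      using dpos[OF uVP[OF i]] finsucc by (intro sum_mono2) (auto intro: less_imp_le)
    also have "\<dots> = 1" using dsum[OF uVP[OF i]] .
    finally show ?thesis .
  qed
  have Sfin: "finite S"
  proof -
    have "S = (\<lambda>(v, v'). snd (quotient_of (\<delta> v v'))) ` {e \<in> E. fst e \<in> VP}"
      unfolding S_def by force
    then show ?thesis using finE by simp
  qed
  have cardS: "card S \<le> card E"
  proof -
    have "S = (\<lambda>(v, v'). snd (quotient_of (\<delta> v v'))) ` {e \<in> E. fst e \<in> VP}"
      unfolding S_def by force
    then have "card S \<le> card {e \<in> E. fst e \<in> VP}" by (simp add: card_image_le finE)
    also have "\<dots> \<le> card E" using finE by (intro card_mono) auto
    finally show ?thesis .
  qed
  have Spos: "\<And>s. s \<in> S \<Longrightarrow> s > 0" unfolding S_def using quotient_of_denom_pos' by auto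
  have u1: "is_boundary VP E (C 1) (u 1)" using ub m1 by auto
  then obtain v' where "(u 1, v') \<in> E" unfolding is_boundary_def succ_def by auto
  then have Sne: "S \<noteq> {}" using u1 unfolding S_def is_boundary_def by auto
  have N1: "N \<ge> 1" using Spos Sne Sfin unfolding N_def
    by (metis Max_in int_one_le_iff_zero_less)
  have leN: "\<And>s. s \<in> S \<Longrightarrow> s \<le> N" unfolding N_def using Sfin by simp
  have Lpos: "L > 0"
  proof -
    have "L \<noteq> 0" unfolding L_def using Sfin Spos by (auto simp: Lcm_0_iff)
    moreover have "L \<ge> 0" unfolding L_def by simp
    ultimately show ?thesis by simp
  qed
  have Ldvd: "L dvd \<Prod>S" unfolding L_def using Sfin by (intro Lcm_least dvd_prodI) auto
  have "\<Prod>S \<le> (\<Prod>s\<in>S. N)" using Spos leN by (intro prod_mono) (auto simp: less_imp_le)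
  also have "\<dots> = N ^ card S" by simp
  also have "\<dots> \<le> N ^ (card V ^ 2)" using N1 cardS cardE by (intro power_increasing) auto
  finally have LN: "L \<le> N ^ (card V ^ 2)"
    using Ldvd Lpos Spos Sfin by (meson order_trans prod_pos zdvd_imp_le)
  have Ld: "of_int L * \<delta> v v' \<in> \<int>" if "v \<in> VP" "(v, v') \<in> E" for v v'
    by (rule rat_mult_denom_Ints) (use that in \<open>auto simp: L_def S_def intro!: dvd_Lcm\<close>)
  have pL: "snd (quotient_of (p i j)) dvd L" if "i \<in> {1..m}" for i j
  proof (rule Ints_imp_denom_dvd)
    show "of_int L * p i j \<in> \<int>" unfolding p_def sum_distrib_left
      using uVP[OF that] by (intro Ints_sum Ld) (auto simp: succ_def)
  qed
  have \<alpha>L: "\<alpha> dvd L" unfolding \<alpha>_def using pL by (auto intro!: Lcm_least)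
  have \<alpha>nn: "\<alpha> \<ge> 0" unfolding \<alpha>_def by simp
  have \<alpha>le: "\<alpha> \<le> L" using \<alpha>L Lpos by (simp add: zdvd_imp_le)
  have p\<alpha>: "of_int \<alpha> * p i j \<in> \<int>" if "i \<in> {1..m}" "j \<in> {1..m}" for i j
  proof (rule rat_mult_denom_Ints)
    have "j \<in> {1..k}" using that mk by auto
    then have "snd (quotient_of (p i j)) \<in> {snd (quotient_of (p i j)) | i j. i \<in> {1..m} \<and> j \<in> {1..k}}"
      using that(1) by blast
    then show "snd (quotient_of (p i j)) dvd \<alpha>" unfolding \<alpha>_def by (rule dvd_Lcm)
  qed
  have Mc: "M \<in> carrier_mat m m" unfolding M_def by simp
  have part1: "det M \<in> \<int>"
  proof (rule det_Ints[OF Mc])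
    fix i j assume "i < m" "j < m"
    then show "M $$ (i, j) \<in> \<int>" using p\<alpha>[of "Suc i" "Suc j"]
      by (simp add: M_def right_diff_distrib)
  qed
  have rowb: "(\<Sum>j = 0..<m. \<bar>M $$ (i, j)\<bar>) \<le> 2 * of_int \<alpha>" if i: "i < m" for i
  proof -
    have "(\<Sum>j = 0..<m. \<bar>M $$ (i, j)\<bar>)
        = (\<Sum>j = 0..<m. of_int \<alpha> * \<bar>(if i = j then 1 else 0) - p (Suc i) (Suc j)\<bar>)"
      using i \<alpha>nn by (intro sum.cong) (auto simp: M_def abs_mult)
    also have "\<dots> \<le> (\<Sum>j = 0..<m. of_int \<alpha> * ((if i = j then 1 else 0) + p (Suc i) (Suc j)))"
      using \<alpha>nn pnn[of "Suc i"] i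
      by (intro sum_mono mult_left_mono) (auto simp: abs_le_iff)
    also have "\<dots> = of_int \<alpha> * (1 + (\<Sum>j<m. p (Suc i) (Suc j)))"
      using i by (simp add: sum_distrib_left[symmetric] sum.distrib atLeast0LessThan)
    also have "\<dots> \<le> of_int \<alpha> * 2"
      using psum[of "Suc i"] i \<alpha>nn by (intro mult_left_mono) auto
    finally show ?thesis by simp
  qed
  have part2: "\<bar>det M\<bar> \<le> (2 * of_int \<alpha>) ^ m"
    by (rule det_row_bound[OF Mc rowb])
  have part3: "(2 * \<alpha>) ^ m \<le> 2 ^ card V * N ^ (card V ^ 3)"
  proof -
    have "(2 * \<alpha>) ^ m = 2 ^ m * \<alpha> ^ m" by (simp add: power_mult_distrib)
    also have "\<dots> \<le> 2 ^ card V * (N ^ (card V ^ 2)) ^ m"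
      using mV \<alpha>nn \<alpha>le LN
      by (intro mult_mono power_increasing power_mono) auto
    also have "(N ^ (card V ^ 2)) ^ m = N ^ (card V ^ 2 * m)" by (simp add: power_mult)
    also have "\<dots> \<le> N ^ (card V ^ 3)"
    proof (rule power_increasing[OF _ N1])
      have "card V ^ 2 * m \<le> card V ^ 2 * card V" using mV by simp
      then show "card V ^ 2 * m \<le> card V ^ 3" by (simp add: power3_eq_cube power2_eq_square)
    qed
    finally show ?thesis by simp
  qed
  show ?thesis
    unfolding Let_def p_def[symmetric] \<alpha>_def[symmetric] M_def[symmetric] S_def[symmetric]
      N_def[symmetric]
    using part1 part2 part3 by simp
qed

end
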